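(* Every geometric centrality has ties on every graph that is not geometrically rigid. Moreover, there exists a geometric centrality $f$ such that for every geometrically rigid graph $G$, $f$ has no ties on $G$.
   Context: A graph $G$ is a finite directed graph with node set $V_G=\{0,\dots,n-1\}$ and arc set $E_G\subseteq V_G\times V_G$. A path of length $k$ from $x$ to $y$ is a sequence $x=x_0,\dots,x_k=y$ with $(x_i,x_{i+1})\in E_G$; $d_G(x,y)$ is the length of a shortest such path, or $\infty$ if none exists. An isomorphism $\varphi:G\to H$ is a bijection with $x\to_G y$ iff $\varphi(x)\to_H\varphi(y)$. A centrality $f$ assigns to each graph $G$ a map $f_G:V_G\to\mathbb{R}$ with $f_G(x)=f_H(\varphi(x))$ for every isomorphism $\varphi:G\to H$. $f$ has no ties on $G$ if $f_G(x)\ne f_G(y)$ for all distinct $x,y$. For a node $i$, the distance-count function is $c_{G,i}:\mathbb{N}\to\mathbb{N}$, $c_{G,i}(k)=|\{j\in V_G: d_G(j,i)=k\}|$. The distance-count matrix $C_G\in\mathbb{R}^{n\times n}$ has entries $(C_G)_{i,k}=c_{G,i}(k)$ for $i,k\in\{0,\dots,n-1\}$. $G$ is geometrically rigid if the rows of $C_G$ are pairwise distinct. A centrality $f$ respects a permutation $\pi$ of $V_G$ on $G$ if $f_G(\pi(i))\ge f_G(\pi(i+1))$ for all $i<n-1$; two centralities are equivalent if on every graph they respect exactly the same permutations. A centrality $f$ is strictly geometric if for all graphs $G,G'$ and nodes $i\in V_G$, $i'\in V_{G'}$, $c_{G,i}=c_{G',i'}$ implies $f_G(i)=f_{G'}(i')$;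 it is geometric if it is equivalent to a strictly geometric centrality. *)

theory Defs
  imports Main "HOL-Library.Extended_Nat" "HOL-Combinatorics.Permutations"
begin

text \<open>A graph is a pair (n, E): node set {0..<n}, arc set E \<subseteq> V \<times> V.\<close>
type_synonym graph = "nat \<times> (nat \<times> nat) set"

definition nodes :: "graph \<Rightarrow> nat set" where
  "nodes G = {..<fst G}"

definition arcs :: "graph \<Rightarrow> (nat \<times> nat) set" where
  "arcs G = snd G"

definition wf_graph :: "graph \<Rightarrow> bool" where
  "wf_graph G \<longleftrightarrow> arcs G \<subseteq> nodes G \<times> nodes G"

definition gdist :: "graph \<Rightarrow> nat \<Rightarrow> nat \<Rightarrow> enat" where
  "gdist G x y = (if \<exists>k. (x, y) \<in> arcs G ^^ k
                  then enat (LEAST k. (x, y) \<in> arcs G ^^ k) else \<infinity>)"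

definition is_iso :: "graph \<Rightarrow> graph \<Rightarrow> (nat \<Rightarrow> nat) \<Rightarrow> bool" where
  "is_iso G H \<phi> \<longleftrightarrow> bij_betw \<phi> (nodes G) (nodes H) \<and>
     (\<forall>x\<in>nodes G. \<forall>y\<in>nodes G. (x, y) \<in> arcs G \<longleftrightarrow> (\<phi> x, \<phi> y) \<in> arcs H)"

text \<open>A centrality assigns to each graph G a map on its nodes (values off V_G are irrelevant).\<close>
definition is_centrality :: "(graph \<Rightarrow> nat \<Rightarrow> real) \<Rightarrow> bool" where
  "is_centrality f \<longleftrightarrow> (\<forall>G H \<phi>. wf_graph G \<longrightarrow> wf_graph H \<longrightarrow> is_iso G H \<phi> \<longrightarrow>
      (\<forall>x\<in>nodes G. f G x = f H (\<phi> x)))"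

definition has_no_ties :: "(graph \<Rightarrow> nat \<Rightarrow> real) \<Rightarrow> graph \<Rightarrow> bool" where
  "has_no_ties f G \<longleftrightarrow> (\<forall>x\<in>nodes G. \<forall>y\<in>nodes G. x \<noteq> y \<longrightarrow> f G x \<noteq> f G y)"

definition dcount :: "graph \<Rightarrow> nat \<Rightarrow> nat \<Rightarrow> nat" where
  "dcount G i k = card {j \<in> nodes G. gdist G j i = enat k}"

text \<open>Rows of the distance-count matrix C_G (columns k = 0..n-1) are pairwise distinct.\<close>
definition geom_rigid :: "graph \<Rightarrow> bool" where
  "geom_rigid G \<longleftrightarrow> (\<forall>i\<in>nodes G. \<forall>j\<in>nodes G. i \<noteq> j \<longrightarrow>
      (\<lambda>k\<in>{..<fst G}. dcount G i k) \<noteq> (\<lambda>k\<in>{..<fst G}. dcount G j k))"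

definition respects_perm :: "(graph \<Rightarrow> nat \<Rightarrow> real) \<Rightarrow> graph \<Rightarrow> (nat \<Rightarrow> nat) \<Rightarrow> bool" where
  "respects_perm f G \<pi> \<longleftrightarrow> (\<forall>i. i + 1 < fst G \<longrightarrow> f G (\<pi> i) \<ge> f G (\<pi> (i + 1)))"

definition centrality_equiv :: "(graph \<Rightarrow> nat \<Rightarrow> real) \<Rightarrow> (graph \<Rightarrow> nat \<Rightarrow> real) \<Rightarrow> bool" where
  "centrality_equiv f g \<longleftrightarrow> (\<forall>G \<pi>. wf_graph G \<longrightarrow> \<pi> permutes nodes G \<longrightarrow>
      (respects_perm f G \<pi> \<longleftrightarrow> respects_perm g G \<pi>))"

definition strictly_geometric :: "(graph \<Rightarrow> nat \<Rightarrow> real) \<Rightarrow> bool" where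
  "strictly_geometric f \<longleftrightarrow> (\<forall>G G' i i'. wf_graph G \<longrightarrow> wf_graph G' \<longrightarrow>
      i \<in> nodes G \<longrightarrow> i' \<in> nodes G' \<longrightarrow> dcount G i = dcount G' i' \<longrightarrow> f G i = f G' i')"

definition geometric :: "(graph \<Rightarrow> nat \<Rightarrow> real) \<Rightarrow> bool" where
  "geometric f \<longleftrightarrow> (\<exists>g. is_centrality g \<and> strictly_geometric g \<and> centrality_equiv f g)"

end

theory Submission imports Defs "HOL-Library.Countable" begin

lemma path_nodes:
  assumes "wf_graph G" "f 0 \<in> nodes G" "\<forall>i<k. (f i, f (Suc i)) \<in> arcs G" "i \<le> k"
  shows "f i \<in> nodes G"
proof (cases i)
  case 0 then show ?thesis using assms by simp
next
  case (Suc m) then have "(f m, f i) \<in> arcs G" using assms by auto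
  then show ?thesis using assms(1) unfolding wf_graph_def by auto
qed

lemma gdist_bound:
  assumes wf: "wf_graph G" and x: "x \<in> nodes G" and d: "gdist G x y = enat k"
  shows "k < fst G"
proof (rule ccontr)
  assume "\<not> k < fst G"
  hence kn: "fst G \<le> k" by simp
  have ex: "\<exists>k. (x, y) \<in> arcs G ^^ k" using d unfolding gdist_def by (auto split: if_splits)
  hence kdef: "k = (LEAST k. (x, y) \<in> arcs G ^^ k)" using d unfolding gdist_def by auto
  have "(x, y) \<in> arcs G ^^ k" unfolding kdef by (rule LeastI_ex[OF ex])
  then obtain f where f0: "f 0 = x" and fk: "f k = y" and fs: "\<forall>i<k. (f i, f (Suc i)) \<in> arcs G"
    unfolding relpow_fun_conv by blast
  have fin: "f ` {..k} \<subseteq> nodes G" using path_nodes[OF wf _ fs] f0 x by auto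
  have "\<not> inj_on f {..k}"
  proof
    assume "inj_on f {..k}"
    hence "card (f ` {..k}) = Suc k" by (simp add: card_image)
    moreover have "card (f ` {..k}) \<le> card (nodes G)" using fin by (intro card_mono) (auto simp: nodes_def)
    ultimately show False using kn by (simp add: nodes_def)
  qed
  then obtain a b where ab: "a < b" "b \<le> k" "f a = f b"
    unfolding inj_on_def by (metis atMost_iff linorder_neqE_nat)
  define g where "g i = (if i \<le> a then f i else f (i + (b - a)))" for i
  define k' where "k' = k - (b - a)"
  have "g 0 = x" using f0 by (simp add: g_def)
  moreover have "g k' = y"
  proof (cases "k' \<le> a")
    case True then have "k = b" using ab by (simp add: k'_def)
    then show ?thesis using True fk ab by (simp add: g_def k'_def)
  next
    case False then show ?thesis using fk ab by (simp add: g_def k'_def)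
  qed
  moreover have "\<forall>i<k'. (g i, g (Suc i)) \<in> arcs G"
  proof (intro allI impI)
    fix i assume i: "i < k'"
    consider "Suc i \<le> a" | "i = a" | "i > a" by linarith
    then show "(g i, g (Suc i)) \<in> arcs G"
    proof cases
      case 1 then show ?thesis using fs ab i by (auto simp: g_def k'_def)
    next
      case 2
      have "(f b, f (Suc b)) \<in> arcs G" using fs ab i 2 by (auto simp: k'_def)
      then show ?thesis using 2 ab by (auto simp: g_def)
    next
      case 3
      have "(f (i + (b - a)), f (Suc (i + (b - a)))) \<in> arcs G" using fs ab i 3 by (auto simp: k'_def)
      then show ?thesis using 3 ab by (auto simp: g_def)
    qed
  qed
  ultimately have "(x, y) \<in> arcs G ^^ k'" unfolding relpow_fun_conv by blast
  hence "k \<le> k'" unfolding kdef by (rule Least_le)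
  then show False using ab kn by (simp add: k'_def)
qed

lemma dcount_zero:
  assumes "wf_graph G" "fst G \<le> k" shows "dcount G i k = 0"
proof -
  have "{j \<in> nodes G. gdist G j i = enat k} = {}" using gdist_bound[OF assms(1)] assms(2) by fastforce
  then show ?thesis unfolding dcount_def by (simp only: card.empty)
qed

lemma iso_relpow:
  assumes wG: "wf_graph G" and wH: "wf_graph H" and iso: "is_iso G H \<phi>"
    and u: "u \<in> nodes G" and v: "v \<in> nodes G"
  shows "(u, v) \<in> arcs G ^^ k \<longleftrightarrow> (\<phi> u, \<phi> v) \<in> arcs H ^^ k"
proof
  have bij: "bij_betw \<phi> (nodes G) (nodes H)" and ar: "\<forall>x\<in>nodes G. \<forall>y\<in>nodes G. (x, y) \<in> arcs G \<longleftrightarrow> (\<phi> x, \<phi> y) \<in> arcs H"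
    using iso unfolding is_iso_def by auto
  {
    assume "(u, v) \<in> arcs G ^^ k"
    then obtain f where f0: "f 0 = u" and fk: "f k = v" and fs: "\<forall>i<k. (f i, f (Suc i)) \<in> arcs G"
      unfolding relpow_fun_conv by blast
    have "\<forall>i<k. ((\<phi> \<circ> f) i, (\<phi> \<circ> f) (Suc i)) \<in> arcs H"
    proof (intro allI impI)
      fix i assume i: "i < k"
      have "f i \<in> nodes G" "f (Suc i) \<in> nodes G" using path_nodes[OF wG _ fs] f0 u i by auto
      then show "((\<phi> \<circ> f) i, (\<phi> \<circ> f) (Suc i)) \<in> arcs H" using ar fs i by auto
    qed
    then show "(\<phi> u, \<phi> v) \<in> arcs H ^^ k" unfolding relpow_fun_conv using f0 fk
      by (intro exI[of _ "\<phi> \<circ> f"]) auto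
  }
  {
    assume "(\<phi> u, \<phi> v) \<in> arcs H ^^ k"
    then obtain g where g0: "g 0 = \<phi> u" and gk: "g k = \<phi> v" and gs: "\<forall>i<k. (g i, g (Suc i)) \<in> arcs H"
      unfolding relpow_fun_conv by blast
    have uH: "\<phi> u \<in> nodes H" using bij u by (auto simp: bij_betw_def)
    have gn: "g i \<in> nodes H" if "i \<le> k" for i using path_nodes[OF wH _ gs that] g0 uH by auto
    define f where "f i = inv_into (nodes G) \<phi> (g i)" for i
    have inj: "inj_on \<phi> (nodes G)" and im: "\<phi> ` nodes G = nodes H" using bij by (auto simp: bij_betw_def)
    have fn: "f i \<in> nodes G" and ff: "\<phi> (f i) = g i" if "i \<le> k" for i
      using gn[OF that] im unfolding f_def by (auto intro: inv_into_into f_inv_into_f)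
    have "f 0 = u" unfolding f_def g0 using inj u by simp
    moreover have "f k = v" unfolding f_def gk using inj v by simp
    moreover have "\<forall>i<k. (f i, f (Suc i)) \<in> arcs G"
    proof (intro allI impI)
      fix i assume i: "i < k"
      then show "(f i, f (Suc i)) \<in> arcs G" using ar fn[of i] fn[of "Suc i"] ff[of i] ff[of "Suc i"] gs by auto
    qed
    ultimately show "(u, v) \<in> arcs G ^^ k" unfolding relpow_fun_conv by blast
  }
qed

lemma iso_gdist:
  assumes "wf_graph G" "wf_graph H" "is_iso G H \<phi>" "u \<in> nodes G" "v \<in> nodes G"
  shows "gdist H (\<phi> u) (\<phi> v) = gdist G u v"
  using iso_relpow[OF assms] unfolding gdist_def by simp

lemma iso_dcount:
  assumes wG: "wf_graph G" and wH: "wf_graph H" and iso: "is_iso G H \<phi>" and x: "x \<in> nodes G"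
  shows "dcount H (\<phi> x) = dcount G x"
proof
  fix k
  have bij: "bij_betw \<phi> (nodes G) (nodes H)" using iso unfolding is_iso_def by auto
  have inj: "inj_on \<phi> (nodes G)" and im: "\<phi> ` nodes G = nodes H" using bij by (auto simp: bij_betw_def)
  have "{j \<in> nodes H. gdist H j (\<phi> x) = enat k} = \<phi> ` {j \<in> nodes G. gdist G j x = enat k}"
  proof (rule set_eqI, rule iffI)
    fix z assume z: "z \<in> {j \<in> nodes H. gdist H j (\<phi> x) = enat k}"
    then obtain z' where "z' \<in> nodes G" "z = \<phi> z'" using im by auto
    then show "z \<in> \<phi> ` {j \<in> nodes G. gdist G j x = enat k}" using z iso_gdist[OF wG wH iso _ x] by auto
  qed (use iso_gdist[OF wG wH iso _ x] im in auto)
  moreover have "inj_on \<phi> {j \<in> nodes G. gdist G j x = enat k}" using inj by (rule inj_on_subset) auto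
  ultimately show "dcount H (\<phi> x) k = dcount G x k" unfolding dcount_def by (simp add: card_image)
qed

definition Lz :: "(nat \<Rightarrow> nat) \<Rightarrow> nat" where "Lz h = (LEAST m. \<forall>k\<ge>m. h k = 0)"

definition cent :: "graph \<Rightarrow> nat \<Rightarrow> real" where
  "cent G i = real (to_nat (map (dcount G i) [0..<Lz (dcount G i)]))"

lemma Lz_prop: assumes "wf_graph G" "k \<ge> Lz (dcount G i)" shows "dcount G i k = 0"
proof -
  have "\<forall>k\<ge>fst G. dcount G i k = 0" using dcount_zero[OF assms(1)] by auto
  hence "\<forall>k\<ge>Lz (dcount G i). dcount G i k = 0" unfolding Lz_def by (rule LeastI)
  then show ?thesis using assms(2) by auto
qed

lemma cent_inj:
  assumes "wf_graph G" "cent G i = cent G j" shows "dcount G i = dcount G j"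
proof
  fix k
  have eq: "map (dcount G i) [0..<Lz (dcount G i)] = map (dcount G j) [0..<Lz (dcount G j)]"
    using assms(2) unfolding cent_def by simp
  hence L: "Lz (dcount G i) = Lz (dcount G j)" by (metis length_map length_upt minus_nat.diff_0)
  show "dcount G i k = dcount G j k"
  proof (cases "k < Lz (dcount G i)")
    case True then show ?thesis using eq L by (metis (no_types, lifting) map_eq_conv atLeastLessThan_iff set_upt zero_le)
  next
    case False then show ?thesis using Lz_prop[OF assms(1)] L by simp
  qed
qed

lemma chain_mono:
  fixes h :: "nat \<Rightarrow> real" and x y n :: nat
  assumes "\<forall>i. i + 1 < n \<longrightarrow> h i \<ge> (h (i + 1) :: real)"
  shows "x \<le> y \<Longrightarrow> y < n \<Longrightarrow> h x \<ge> h y"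
proof (induction y)
  case 0 then show ?case by simp
next
  case (Suc y)
  show ?case
  proof (cases "x = Suc y")
    case False then have "h x \<ge> h y" using Suc by simp
    moreover have "h y \<ge> h (Suc y)" using assms(1) Suc by auto
    ultimately show ?thesis by simp
  qed simp
qed

lemma part1:
  assumes geo: "geometric f" and wf: "wf_graph G" and nr: "\<not> geom_rigid G"
  shows "\<not> has_no_ties f G"
proof
  assume nt: "has_no_ties f G"
  obtain g where gc: "is_centrality g" and gs: "strictly_geometric g" and eqv: "centrality_equiv f g"
    using geo unfolding geometric_def by blast
  define V where "V = nodes G"
  define n where "n = fst G"
  have Vn: "V = {..<n}" by (simp add: V_def n_def nodes_def)
  obtain i j where ij: "i \<in> V" "j \<in> V" "i \<noteq> j"
    and rows: "(\<lambda>k\<in>{..<fst G}. dcount G i k) = (\<lambda>k\<in>{..<fst G}. dcount G j k)"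
    using nr unfolding geom_rigid_def V_def by blast
  have "dcount G i = dcount G j"
  proof
    fix k show "dcount G i k = dcount G j k"
    proof (cases "k < fst G")
      case True then show ?thesis using fun_cong[OF rows, of k] by simp
    next
      case False then show ?thesis using dcount_zero[OF wf] by simp
    qed
  qed
  hence gij: "g G i = g G j" using gs ij wf unfolding strictly_geometric_def V_def by blast
  define r where "r x = card {y\<in>V. f G y > f G x}" for x
  have nt': "\<And>x y. x \<in> V \<Longrightarrow> y \<in> V \<Longrightarrow> x \<noteq> y \<Longrightarrow> f G x \<noteq> f G y"
    using nt unfolding has_no_ties_def V_def by blast
  have rlt: "r y < r x" if "x \<in> V" "y \<in> V" "f G x < f G y" for x y
  proof -
    have "{z\<in>V. f G z > f G y} \<subset> {z\<in>V. f G z > f G x}" using that by auto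
    then show ?thesis unfolding r_def by (rule psubset_card_mono[rotated]) (simp add: Vn)
  qed
  have rn: "r x < n" if "x \<in> V" for x
  proof -
    have "{y\<in>V. f G y > f G x} \<subset> V" using that by auto
    then show ?thesis unfolding r_def using psubset_card_mono[of V] by (simp add: Vn)
  qed
  have rinj: "inj_on r V"
  proof (rule inj_onI, rule ccontr)
    fix x y assume xy: "x \<in> V" "y \<in> V" "r x = r y" "x \<noteq> y"
    then have "f G x < f G y \<or> f G y < f G x" using nt' by fastforce
    then show False using rlt xy by fastforce
  qed
  have rimg: "r ` V = {..<n}"
  proof (rule card_subset_eq)
    show "r ` V \<subseteq> {..<n}" using rn by auto
    show "card (r ` V) = card {..<n}" using rinj by (simp add: card_image Vn)
  qed simp
  define \<pi> where "\<pi> p = (if p < n then inv_into V r p else p)" for p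
  have piV: "\<pi> p \<in> V" and rpi: "r (\<pi> p) = p" if "p < n" for p
    using that rimg unfolding \<pi>_def by (auto intro: inv_into_into f_inv_into_f)
  have pir: "\<pi> (r x) = x" if "x \<in> V" for x using that rn rinj unfolding \<pi>_def by simp
  have piperm: "\<pi> permutes V"
  proof (rule bij_imp_permutes)
    have "bij_betw (inv_into V r) {..<n} V" using rinj rimg by (metis bij_betw_imageI bij_betw_inv_into)
    then have "bij_betw \<pi> {..<n} V" by (rule bij_betw_cong[THEN iffD1, rotated]) (simp add: \<pi>_def)
    then show "bij_betw \<pi> V V" by (simp add: Vn)
    show "\<And>x. x \<notin> V \<Longrightarrow> \<pi> x = x" by (simp add: \<pi>_def Vn)
  qed
  have respf: "respects_perm f G \<pi>" unfolding respects_perm_def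
  proof (intro allI impI)
    fix p assume p: "p + 1 < fst G"
    show "f G (\<pi> p) \<ge> f G (\<pi> (p + 1))"
    proof (rule ccontr)
      assume "\<not> ?thesis"
      hence "r (\<pi> (p+1)) < r (\<pi> p)" using rlt piV p n_def by simp
      then show False using rpi p n_def by simp
    qed
  qed
  have piG: "\<pi> permutes nodes G" using piperm V_def by simp
  have respg: "respects_perm g G \<pi>" using eqv respf wf piG unfolding centrality_equiv_def by blast
  define h where "h q = g G (\<pi> q)" for q
  have hmono: "\<forall>q. q + 1 < n \<longrightarrow> h q \<ge> h (q + 1)" using respg unfolding respects_perm_def h_def n_def by simp
  define a where "a = min (r i) (r j)"
  define b where "b = max (r i) (r j)"
  have rij: "r i \<noteq> r j" using rinj ij by (auto dest: inj_onD)
  have ab: "a < b" "b < n" using rij rn ij by (auto simp: a_def b_def)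
  have hab: "h a = h b" using gij pir ij by (auto simp: h_def a_def b_def min_def max_def)
  have "h a \<ge> h (a + 1)" using hmono ab by simp
  moreover have "h (a + 1) \<ge> h b" using chain_mono[OF hmono, of "a+1" b] ab by simp
  ultimately have ha1: "h a = h (a + 1)" using hab by simp
  define \<pi>' where "\<pi>' = \<pi> \<circ> Transposition.transpose a (a + 1)"
  have pi'perm: "\<pi>' permutes nodes G" unfolding \<pi>'_def
  proof -
    have "a \<in> V" "a + 1 \<in> V" using ab Vn by auto
    then have "\<pi> \<circ> Transposition.transpose a (a + 1) permutes V"
      by (intro permutes_compose[OF permutes_swap_id piperm])
    then show "\<pi> \<circ> Transposition.transpose a (a + 1) permutes nodes G" by (simp only: V_def)
  qed
  have hq: "g G (\<pi>' q) = h q" for q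
  proof -
    consider "q = a" | "q = a + 1" | "q \<noteq> a" "q \<noteq> a + 1" by blast
    then show ?thesis
    proof cases
      case 1 then show ?thesis using ha1 unfolding \<pi>'_def h_def by simp
    next
      case 2 then show ?thesis using ha1 unfolding \<pi>'_def h_def by simp
    next
      case 3 then show ?thesis unfolding \<pi>'_def h_def by simp
    qed
  qed
  have "respects_perm g G \<pi>'" using respg hq h_def unfolding respects_perm_def by simp
  hence respf': "respects_perm f G \<pi>'" using eqv wf pi'perm unfolding centrality_equiv_def by blast
  have "f G (\<pi>' a) \<ge> f G (\<pi>' (a+1))" using respf' ab unfolding respects_perm_def n_def by simp
  hence "f G (\<pi> (a+1)) \<ge> f G (\<pi> a)" by (simp add: \<pi>'_def)
  moreover have "f G (\<pi> a) \<ge> f G (\<pi> (a+1))" using respf ab unfolding respects_perm_def n_def by simp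
  ultimately have "f G (\<pi> a) = f G (\<pi> (a+1))" by simp
  moreover have a1: "a + 1 < n" "a < n" using ab by auto
  ultimately have "\<pi> a = \<pi> (a+1)" using nt'[OF piV[of a] piV[of "a+1"]] by blast
  hence "r (\<pi> a) = r (\<pi> (a+1))" by simp
  then show False using rpi[OF a1(1)] rpi[OF a1(2)] by simp
qed


theorem theorem2:
  shows "(\<forall>f G. is_centrality f \<and> geometric f \<and> wf_graph G \<and> \<not> geom_rigid G
            \<longrightarrow> \<not> has_no_ties f G)
       \<and> (\<exists>f. is_centrality f \<and> geometric f \<and>
            (\<forall>G. wf_graph G \<and> geom_rigid G \<longrightarrow> has_no_ties f G))"
proof (intro conjI)
  show "\<forall>f G. is_centrality f \<and> geometric f \<and> wf_graph G \<and> \<not> geom_rigid G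
            \<longrightarrow> \<not> has_no_ties f G" using part1 by blast
  have c: "is_centrality cent" unfolding is_centrality_def cent_def
    using iso_dcount by simp
  have sg: "strictly_geometric cent" unfolding strictly_geometric_def cent_def by simp
  have "centrality_equiv cent cent" unfolding centrality_equiv_def by simp
  hence g: "geometric cent" using c sg unfolding geometric_def by blast
  have "has_no_ties cent G" if "wf_graph G" "geom_rigid G" for G
    unfolding has_no_ties_def
  proof (intro ballI impI)
    fix x y assume xy: "x \<in> nodes G" "y \<in> nodes G" "x \<noteq> y"
    show "cent G x \<noteq> cent G y"
    proof
      assume "cent G x = cent G y"
      hence "dcount G x = dcount G y" using cent_inj that(1) by blast
      then show False using that(2) xy unfolding geom_rigid_def by metis
    qed
  qed
  then show "\<exists>f. is_centrality f \<and> geometric f \<and>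
            (\<forall>G. wf_graph G \<and> geom_rigid G \<longrightarrow> has_no_ties f G)" using c g by blast
qed

end
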